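(* Let $\mathcal{H}$ be a real Hilbert space, let $A:\mathcal{H}\rightrightarrows\mathcal{H}$ be maximal monotone with $A^{-1}(0)\neq\emptyset$, let $\theta>0$, let $p\geq1$ be an integer, and let $(x,\lambda):[0,+\infty)\to\mathcal{H}\times(0,+\infty)$ be a global solution of \[ \dot{x}(t)+x(t)-(I+\lambda(t)A)^{-1}x(t)=0,\qquad \lambda(t)\,\|(I+\lambda(t)A)^{-1}x(t)-x(t)\|^{p-1}=\theta, \] with $x(0)\in\{x\in\mathcal{H}:0\notin Ax\}$. Suppose that either (i) $A=\nabla\Phi$ where $\Phi:\mathcal{H}\to\mathbb{R}\cup\{+\infty\}$ is convex, differentiable and inf-compact, or (ii) $A^{-1}(0)$ has nonempty interior. Then there exists $\bar{x}\in A^{-1}(0)$ such that $x(t)$ converges strongly to $\bar{x}$ as $t\to+\infty$.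
   Context: $(I+\lambda A)^{-1}$ is the resolvent of $A$ of index $\lambda>0$; $A^{-1}(0)=\{x:0\in Ax\}$. A function $\Phi$ is inf-compact if for every $r>0$ and $\kappa\in\mathbb{R}$ the set $\{x\in\mathcal{H}:\|x\|\leq r,\ \Phi(x)\leq\kappa\}$ is relatively compact in $\mathcal{H}$. *)

theory Defs
  imports "HOL-Analysis.Analysis"
begin

text \<open>Set-valued operators on a real Hilbert space are modelled as functions
  A :: 'a \<Rightarrow> 'a set (graph = pairs (x,u) with u \<in> A x).\<close>

definition monotone_op :: "('a::real_inner \<Rightarrow> 'a set) \<Rightarrow> bool" where
  "monotone_op A \<longleftrightarrow>
     (\<forall>x y u v. u \<in> A x \<longrightarrow> v \<in> A y \<longrightarrow> inner (u - v) (x - y) \<ge> 0)"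

definition maximal_monotone :: "('a::real_inner \<Rightarrow> 'a set) \<Rightarrow> bool" where
  "maximal_monotone A \<longleftrightarrow> monotone_op A \<and>
     (\<forall>x u. (\<forall>y v. v \<in> A y \<longrightarrow> inner (u - v) (x - y) \<ge> 0) \<longrightarrow> u \<in> A x)"

text \<open>Resolvent (I + lam A)^{-1} x: the (for maximal monotone A and lam > 0, unique)
  point y with x \<in> y + lam A y.\<close>
definition resolvent :: "('a::real_inner \<Rightarrow> 'a set) \<Rightarrow> real \<Rightarrow> 'a \<Rightarrow> 'a" where
  "resolvent A lam x = (THE y. \<exists>u \<in> A y. x = y + lam *\<^sub>R u)"

definition zeros_op :: "('a::real_inner \<Rightarrow> 'a set) \<Rightarrow> 'a set" where
  "zeros_op A = {x. 0 \<in> A x}"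

definition edom :: "('a \<Rightarrow> ereal) \<Rightarrow> 'a set" where
  "edom \<Phi> = {x. \<Phi> x < \<infinity>}"

definition econvex :: "('a::real_vector \<Rightarrow> ereal) \<Rightarrow> bool" where
  "econvex \<Phi> \<longleftrightarrow> (\<forall>x y t. 0 \<le> t \<longrightarrow> t \<le> 1 \<longrightarrow>
      \<Phi> ((1 - t) *\<^sub>R x + t *\<^sub>R y) \<le> ereal (1 - t) * \<Phi> x + ereal t * \<Phi> y)"

definition edifferentiable :: "('a::real_normed_vector \<Rightarrow> ereal) \<Rightarrow> bool" where
  "edifferentiable \<Phi> \<longleftrightarrow> open (edom \<Phi>) \<and>
      (\<forall>x \<in> edom \<Phi>. (\<lambda>y. real_of_ereal (\<Phi> y)) differentiable (at x))"

definition egradient_op :: "('a::real_inner \<Rightarrow> ereal) \<Rightarrow> 'a \<Rightarrow> 'a set" where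
  "egradient_op \<Phi> x = {g. x \<in> edom \<Phi> \<and>
      ((\<lambda>y. real_of_ereal (\<Phi> y)) has_derivative (\<lambda>h. inner g h)) (at x)}"

definition inf_compact :: "('a::real_normed_vector \<Rightarrow> ereal) \<Rightarrow> bool" where
  "inf_compact \<Phi> \<longleftrightarrow> (\<forall>r>0. \<forall>\<kappa>::real. compact (closure {x. norm x \<le> r \<and> \<Phi> x \<le> ereal \<kappa>}))"

end

theory Submission
  imports Defs
begin


lemma norm_conv_sq:
  fixes a b :: "'a::real_inner"
  shows "norm ((1-t) *\<^sub>R a + t *\<^sub>R b)^2 = (1-t) * norm a^2 + t * norm b^2 - t*(1-t) * norm (a-b)^2"
  by (simp add: power2_norm_eq_inner inner_add_left inner_add_right inner_diff_left inner_diff_right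
      inner_commute algebra_simps)

lemma norm_diff_sq:
  fixes a b :: "'a::real_inner"
  shows "norm (a - b)^2 = norm a^2 - 2 * inner a b + norm b^2"
  by (simp add: power2_norm_eq_inner inner_diff_left inner_diff_right inner_commute)

lemma norm_add_sq:
  fixes a b :: "'a::real_inner"
  shows "norm (a + b)^2 = norm a^2 + 2 * inner a b + norm b^2"
  by (simp add: power2_norm_eq_inner inner_add_left inner_add_right inner_commute)

lemma aux_half: fixes a f n p r :: real shows "a \<le> f \<Longrightarrow> n = p + 2*a + r \<Longrightarrow> n/2 \<le> f + (p + r)/2"
  by argo

lemma lin3: fixes fm f12 qm q12 E g12 :: real
  shows "fm \<le> f12 \<Longrightarrow> qm = q12 - E \<Longrightarrow> g12 = f12 + q12 \<Longrightarrow> fm + qm \<le> g12 - E"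
  by argo

lemma aux_div: fixes X Y t D :: real
  assumes h: "X \<le> (1-t)*X + t*Y - t*(1-t)/2*D" and t: "0 < t"
  shows "(1-t)*D/2 \<le> Y - X"
proof -
  have "t*(Y - X - (1-t)*D/2) = (1-t)*X + t*Y - t*(1-t)/2*D - X" by (simp add: algebra_simps)
  then have "0 \<le> t*(Y - X - (1-t)*D/2)" using h by argo
  then show ?thesis using t by (simp add: zero_le_mult_iff)
qed

lemma small_t_aux:
  fixes c D :: real
  assumes "D \<ge> 0" "\<And>t. 0 < t \<Longrightarrow> t \<le> 1 \<Longrightarrow> c \<ge> (1-t) * D / 2"
  shows "c \<ge> D / 2"
proof (rule ccontr)
  assume "\<not> c \<ge> D/2"
  then have c: "c < D/2" by simp
  then have Dp: "D > 0" using assms(2)[of 1] by auto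
  define t where "t = min 1 ((D/2 - c)/D)"
  have "0 < t" "t \<le> 1" using c Dp by (auto simp: t_def)
  from assms(2)[OF this] have h: "c \<ge> (1-t)*D/2" .
  show False
  proof (cases "(D/2 - c)/D \<le> 1")
    case True
    then have "t = (D/2 - c)/D" by (simp add: t_def)
    with h Dp c show False by (simp add: field_simps)
  next
    case False
    then have "t = 1" by (simp add: t_def)
    with h False Dp c show False by (simp add: field_simps)
  qed
qed

lemma minty0:
  fixes B :: "'a::{real_inner,complete_space} \<Rightarrow> 'a set"
  assumes mm: "maximal_monotone B"
  shows "\<exists>y. -y \<in> B y"
proof -
  have mon: "\<And>x y u v. u \<in> B x \<Longrightarrow> v \<in> B y \<Longrightarrow> inner (u - v) (x - y) \<ge> 0"
    using mm unfolding maximal_monotone_def monotone_op_def by blast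
  have mx: "\<And>x u. (\<And>y v. v \<in> B y \<Longrightarrow> inner (u - v) (x - y) \<ge> 0) \<Longrightarrow> u \<in> B x"
    using mm unfolding maximal_monotone_def by blast
  define gr where "gr = {w. snd w \<in> B (fst w)}"
  define \<phi> where "\<phi> w x u = inner x (snd w) + inner (fst w) u - inner (fst w) (snd w)"
    for w :: "'a \<times> 'a" and x u
  define P where "P x u \<longleftrightarrow> bdd_above ((\<lambda>w. \<phi> w x u) ` gr)" for x u
  define F where "F x u = Sup ((\<lambda>w. \<phi> w x u) ` gr)" for x u
  define q where "q x u = (norm x ^ 2 + norm u ^ 2) / 2" for x u :: 'a
  define G where "G x u = F x u + q x u" for x u
  have grne: "gr \<noteq> {}"
  proof
    assume e: "gr = {}"
    then have "0 \<in> B 0" by (intro mx) (auto simp: gr_def)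
    then show False using e by (auto simp: gr_def)
  qed
  have phi_le: "\<phi> w x u \<le> inner x u" if "w \<in> gr" "u \<in> B x" for w x u
  proof -
    have "inner (u - snd w) (x - fst w) \<ge> 0" using mon[OF that(2), of "snd w" "fst w"] that(1)
      by (auto simp: gr_def)
    moreover have "inner (u - snd w) (x - fst w) = inner x u - \<phi> w x u"
      by (simp add: \<phi>_def inner_diff_left inner_diff_right inner_commute)
    ultimately show ?thesis by linarith
  qed
  have gr_P: "P x u \<and> F x u = inner x u" if "u \<in> B x" for x u
  proof -
    have "bdd_above ((\<lambda>w. \<phi> w x u) ` gr)"
      using phi_le[OF _ that] by (intro bdd_aboveI[of _ "inner x u"]) auto
    moreover have "Sup ((\<lambda>w. \<phi> w x u) ` gr) = inner x u"
    proof (rule cSup_eq_maximum)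
      show "inner x u \<in> (\<lambda>w. \<phi> w x u) ` gr"
        using that by (intro image_eqI[of _ _ "(x,u)"]) (auto simp: gr_def \<phi>_def inner_commute)
    qed (use phi_le[OF _ that] in auto)
    ultimately show ?thesis by (simp add: P_def F_def)
  qed
  have F_ge: "F x u \<ge> inner x u" if "P x u" for x u
  proof (cases "u \<in> B x")
    case True then show ?thesis using gr_P by simp
  next
    case False
    then obtain y v where yv: "v \<in> B y" "inner (u - v) (x - y) < 0"
      using mx by (meson not_le)
    have "inner (u - v) (x - y) = inner x u - \<phi> (y,v) x u"
      by (simp add: \<phi>_def inner_diff_left inner_diff_right inner_commute)
    moreover have "\<phi> (y,v) x u \<le> F x u"
      unfolding F_def using that yv(1) unfolding P_def
      by (intro cSup_upper) (auto simp: gr_def)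
    ultimately show ?thesis using yv(2) by linarith
  qed
  have G_ge: "G x u \<ge> norm (x+u)^2/2" if "P x u" for x u
    proof -
    have "F x u \<ge> inner x u" using F_ge[OF that] .
    moreover have "norm (x+u)^2 = norm x^2 + 2 * inner x u + norm u^2" by (rule norm_add_sq)
    ultimately show ?thesis unfolding G_def q_def by (rule aux_half)
  qed
  have conv: "P ((1-t) *\<^sub>R x1 + t *\<^sub>R x2) ((1-t) *\<^sub>R u1 + t *\<^sub>R u2) \<and>
      F ((1-t) *\<^sub>R x1 + t *\<^sub>R x2) ((1-t) *\<^sub>R u1 + t *\<^sub>R u2) \<le> (1-t) * F x1 u1 + t * F x2 u2"
    if "P x1 u1" "P x2 u2" "0 \<le> t" "t \<le> 1" for x1 u1 x2 u2 t
  proof -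
    have le: "\<phi> w ((1-t) *\<^sub>R x1 + t *\<^sub>R x2) ((1-t) *\<^sub>R u1 + t *\<^sub>R u2) \<le> (1-t) * F x1 u1 + t * F x2 u2"
      if w: "w \<in> gr" for w
    proof -
      have eq: "\<phi> w ((1-t) *\<^sub>R x1 + t *\<^sub>R x2) ((1-t) *\<^sub>R u1 + t *\<^sub>R u2)
          = (1-t) * \<phi> w x1 u1 + t * \<phi> w x2 u2"
        by (simp add: \<phi>_def inner_add_left inner_add_right algebra_simps)
      have "\<phi> w x1 u1 \<le> F x1 u1" "\<phi> w x2 u2 \<le> F x2 u2"
        using \<open>P x1 u1\<close> \<open>P x2 u2\<close> w unfolding P_def F_def by (auto intro: cSup_upper)
      then show ?thesis unfolding eq using \<open>0 \<le> t\<close> \<open>t \<le> 1\<close>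
        by (intro add_mono mult_left_mono) auto
    qed
    show ?thesis
      unfolding P_def F_def
      using le grne by (auto intro!: cSup_least bdd_aboveI simp: F_def)
  qed
  define S where "S = {G x u | x u. P x u}"
  define m where "m = Inf S"
  obtain a0 b0 where "b0 \<in> B a0" using grne by (auto simp: gr_def)
  then have Sne: "S \<noteq> {}" using gr_P by (auto simp: S_def)
  have Sbdd: "bdd_below S"
    unfolding S_def
  proof (rule bdd_belowI[of _ 0])
    fix g assume "g \<in> {G x u |x u. P x u}"
    then obtain x u where "g = G x u" "P x u" by blast
    moreover have "0 \<le> norm (x+u)^2/2" by simp
    ultimately show "0 \<le> g" using G_ge[of x u] by (meson order_trans)
  qed
  have m_le: "m \<le> G x u" if "P x u" for x u
    unfolding m_def using Sbdd that by (intro cInf_lower) (auto simp: S_def)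
  have "\<forall>n. \<exists>xu. P (fst xu) (snd xu) \<and> G (fst xu) (snd xu) < m + inverse (real (Suc n))"
  proof
    fix n
    have "Inf S < m + inverse (real (Suc n))" by (simp add: m_def)
    then obtain g where "g \<in> S" "g < m + inverse (real (Suc n))"
      using cInf_less_iff[OF Sne Sbdd] by blast
    then show "\<exists>xu. P (fst xu) (snd xu) \<and> G (fst xu) (snd xu) < m + inverse (real (Suc n))"
      by (auto simp: S_def)
  qed
  then obtain z where z: "\<And>n. P (fst (z n)) (snd (z n))"
      "\<And>n. G (fst (z n)) (snd (z n)) < m + inverse (real (Suc n))"
    by metis
  define xs where "xs n = fst (z n)" for n
  define us where "us n = snd (z n)" for n
  have zP: "P (xs n) (us n)" and zG: "G (xs n) (us n) < m + inverse (real (Suc n))" for n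
    using z by (auto simp: xs_def us_def)
  have Gconv: "P ((1-t) *\<^sub>R x1 + t *\<^sub>R x2) ((1-t) *\<^sub>R u1 + t *\<^sub>R u2) \<and>
      G ((1-t) *\<^sub>R x1 + t *\<^sub>R x2) ((1-t) *\<^sub>R u1 + t *\<^sub>R u2) \<le> (1-t) * G x1 u1 + t * G x2 u2
        - t*(1-t)/2 * (norm (x1-x2)^2 + norm (u1-u2)^2)"
    if "P x1 u1" "P x2 u2" "0 \<le> t" "t \<le> 1" for x1 u1 x2 u2 t
  proof -
    note c = conv[OF that]
    have q: "q ((1-t) *\<^sub>R x1 + t *\<^sub>R x2) ((1-t) *\<^sub>R u1 + t *\<^sub>R u2) = (1-t) * q x1 u1 + t * q x2 u2
        - t*(1-t)/2 * (norm (x1-x2)^2 + norm (u1-u2)^2)"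
      unfolding q_def norm_conv_sq by (simp add: field_simps)
    have g: "(1-t) * G x1 u1 + t * G x2 u2 = ((1-t) * F x1 u1 + t * F x2 u2) + ((1-t) * q x1 u1 + t * q x2 u2)"
      by (simp add: G_def algebra_simps)
    have "F ((1-t) *\<^sub>R x1 + t *\<^sub>R x2) ((1-t) *\<^sub>R u1 + t *\<^sub>R u2) \<le> (1-t) * F x1 u1 + t * F x2 u2"
      using c by blast
    from lin3[OF this q g] c show ?thesis unfolding G_def by blast
  qed
  have dist: "norm (xs n - xs k)^2 + norm (us n - us k)^2
      \<le> 4 * (inverse (real (Suc n)) + inverse (real (Suc k)))" for n k
  proof -
    have c: "P ((1-1/2) *\<^sub>R xs n + (1/2) *\<^sub>R xs k) ((1-1/2) *\<^sub>R us n + (1/2) *\<^sub>R us k) \<and>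
      G ((1-1/2) *\<^sub>R xs n + (1/2) *\<^sub>R xs k) ((1-1/2) *\<^sub>R us n + (1/2) *\<^sub>R us k) \<le> (1-1/2) * G (xs n) (us n) + (1/2) * G (xs k) (us k)
        - (1/2)*(1-1/2)/2 * (norm (xs n - xs k)^2 + norm (us n - us k)^2)"
      by (rule Gconv[OF zP zP]) simp_all
    then have "m \<le> (1-1/2) * G (xs n) (us n) + (1/2) * G (xs k) (us k)
        - (1/2)*(1-1/2)/2 * (norm (xs n - xs k)^2 + norm (us n - us k)^2)"
      using m_le by (meson order_trans)
    then show ?thesis using zG[of n] zG[of k] by argo
  qed
  have inv_small: "\<exists>M. \<forall>n\<ge>M. 8 * inverse (real (Suc n)) < e" if "e > 0" for e :: real
  proof -
    obtain M :: nat where "8 / e < real M" using reals_Archimedean2 by blast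
    have "\<forall>n\<ge>M. 8 * inverse (real (Suc n)) < e"
    proof (intro allI impI)
      fix n assume "M \<le> n"
      then have "e * real M \<le> e * real n" using that by (intro mult_left_mono) auto
      moreover have "8 < e * real M" using \<open>8 / e < real M\<close> that by (simp add: field_simps)
      ultimately have "8 < e + e * real n" using that by linarith
      then show "8 * inverse (real (Suc n)) < e" using that by (simp add: field_simps)
    qed
    then show ?thesis by blast
  qed
  have cau: "\<exists>M. \<forall>n\<ge>M. \<forall>k\<ge>M. norm (xs n - xs k) < e \<and> norm (us n - us k) < e"
    if "e > 0" for e
  proof -
    obtain M where M: "\<forall>n\<ge>M. 8 * inverse (real (Suc n)) < e^2" using inv_small[of "e^2"] \<open>0 < e\<close> by (meson zero_less_power)
    have "norm (xs n - xs k) < e \<and> norm (us n - us k) < e" if "n \<ge> M" "k \<ge> M" for n k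
    proof -
      have i1: "inverse (real (Suc n)) \<le> inverse (real (Suc M))" 
        by (rule le_imp_inverse_le) (use that in auto)
      have i2: "inverse (real (Suc k)) \<le> inverse (real (Suc M))" 
        by (rule le_imp_inverse_le) (use that in auto)
      have "norm (xs n - xs k)^2 + norm (us n - us k)^2 < e^2"
      proof -
        have "8 * inverse (real (Suc M)) < e^2" using M by blast
        then show ?thesis using dist[of n k] i1 i2 by argo
      qed
      then have "norm (xs n - xs k)^2 < e^2 \<and> norm (us n - us k)^2 < e^2"
        using zero_le_power2[of "norm (xs n - xs k)"] zero_le_power2[of "norm (us n - us k)"] by argo
      then show ?thesis using \<open>e > 0\<close> by (meson abs_le_square_iff abs_norm_cancel less_le_not_le not_le power2_less_imp_less)
    qed
    then show ?thesis by blast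
  qed
  have "Cauchy xs" "Cauchy us"
    by (rule CauchyI; use cau in blast)+
  then obtain xst ust where xl: "xs \<longlonglongrightarrow> xst" and ul: "us \<longlonglongrightarrow> ust"
    by (meson convergent_def Cauchy_convergent_iff)
  have lim_le: "\<phi> w xst ust + q xst ust \<le> m" if w: "w \<in> gr" for w
  proof (rule LIMSEQ_le)
    show "(\<lambda>n. \<phi> w (xs n) (us n) + q (xs n) (us n)) \<longlonglongrightarrow> \<phi> w xst ust + q xst ust"
      unfolding \<phi>_def q_def by (auto intro!: tendsto_intros xl ul)
    show "(\<lambda>n. m + inverse (real (Suc n))) \<longlonglongrightarrow> m"
      using tendsto_add[OF tendsto_const LIMSEQ_inverse_real_of_nat] by simp
    have "\<phi> w (xs n) (us n) + q (xs n) (us n) \<le> m + inverse (real (Suc n))" for n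
    proof -
      have "\<phi> w (xs n) (us n) \<le> F (xs n) (us n)"
        using zP[of n] w unfolding P_def F_def by (auto intro: cSup_upper)
      then show ?thesis using zG[of n] unfolding G_def by linarith
    qed
    then show "\<exists>N. \<forall>n\<ge>N. \<phi> w (xs n) (us n) + q (xs n) (us n) \<le> m + inverse (real (Suc n))" by blast
  qed
  have Pst: "P xst ust"
    unfolding P_def using lim_le by (intro bdd_aboveI[of _ "m - q xst ust"]) (auto simp: algebra_simps)
  have Fst: "F xst ust + q xst ust \<le> m"
    using lim_le grne unfolding F_def by (subst le_diff_eq[symmetric], intro cSup_least) (auto simp: algebra_simps)
  have key: "inner (a + ust) (b + xst) \<ge> norm (xst + ust)^2" if ab: "b \<in> B a" for a b
  proof -
    define D where "D = norm (xst - a)^2 + norm (ust - b)^2"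
    define c where "c = inner a b - F xst ust + q a b - q xst ust"
    have Pab: "P a b" and Gab: "G a b = inner a b + q a b" using gr_P[OF ab] by (auto simp: G_def)
    have "c \<ge> (1-t) * D / 2" if t: "0 < t" "t \<le> 1" for t
    proof -
      have cv: "P ((1-t) *\<^sub>R xst + t *\<^sub>R a) ((1-t) *\<^sub>R ust + t *\<^sub>R b) \<and>
      G ((1-t) *\<^sub>R xst + t *\<^sub>R a) ((1-t) *\<^sub>R ust + t *\<^sub>R b) \<le> (1-t) * G xst ust + t * G a b
        - t*(1-t)/2 * (norm (xst-a)^2 + norm (ust-b)^2)"
        by (rule Gconv[OF Pst Pab]) (use t in auto)
      have mle: "m \<le> G ((1-t) *\<^sub>R xst + t *\<^sub>R a) ((1-t) *\<^sub>R ust + t *\<^sub>R b)"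
        using m_le cv by blast
      have Fab: "F a b = inner a b" using gr_P[OF ab] by blast
      have "F xst ust + q xst ust \<le> (1-t) * (F xst ust + q xst ust) + t * (inner a b + q a b) - t*(1-t)/2 * D"
      proof -
        have c2: "G ((1-t) *\<^sub>R xst + t *\<^sub>R a) ((1-t) *\<^sub>R ust + t *\<^sub>R b) \<le> (1-t) * G xst ust + t * G a b
          - t*(1-t)/2 * (norm (xst-a)^2 + norm (ust-b)^2)" using cv by blast
        show ?thesis using Fst mle c2 unfolding Gab unfolding G_def D_def by argo
      qed
      from aux_div[OF this t(1)] show ?thesis by (simp add: c_def algebra_simps)
    qed
    moreover have D0: "0 \<le> D" unfolding D_def by simp
    ultimately have "c \<ge> D / 2" using small_t_aux by blast
    moreover have "F xst ust \<ge> inner xst ust" using F_ge Pst by blast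
    moreover have "inner (a + ust) (b + xst) - norm (xst + ust)^2 = (c - D/2) + (F xst ust - inner xst ust)"
      unfolding c_def D_def q_def power2_norm_eq_inner
      by (simp add: inner_add_left inner_add_right inner_diff_left inner_diff_right inner_commute field_simps)
    ultimately show ?thesis by argo
  qed
  have inB: "- xst \<in> B (- ust)"
  proof (rule mx)
    fix y v assume "v \<in> B y"
    from key[OF this] have "0 \<le> inner (y + ust) (v + xst)" by (meson order_trans zero_le_power2)
    then show "0 \<le> inner (- xst - v) (- ust - y)"
      by (simp add: inner_add_left inner_add_right inner_diff_left inner_diff_right inner_commute algebra_simps)
  qed
  from key[OF inB] have "norm (xst + ust)^2 \<le> 0" by simp
  then have "xst = - ust" by (simp add: eq_neg_iff_add_eq_0)
  then show ?thesis using inB by (intro exI[of _ "- ust"]) simp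
qed


lemma resolvent_prop:
  fixes A :: "'a::{real_inner,complete_space} \<Rightarrow> 'a set"
  assumes mm: "maximal_monotone A" and lp: "lam > 0"
  shows "(\<exists>u \<in> A (resolvent A lam x). x = resolvent A lam x + lam *\<^sub>R u)"
proof -
  have mon: "\<And>x y u v. u \<in> A x \<Longrightarrow> v \<in> A y \<Longrightarrow> inner (u - v) (x - y) \<ge> 0"
    using mm unfolding maximal_monotone_def monotone_op_def by blast
  have mx: "\<And>x u. (\<And>y v. v \<in> A y \<Longrightarrow> inner (u - v) (x - y) \<ge> 0) \<Longrightarrow> u \<in> A x"
    using mm unfolding maximal_monotone_def by blast
  define B where "B y = (\<lambda>v. lam *\<^sub>R v) ` A (y + x)" for y
  have "maximal_monotone B"
    unfolding maximal_monotone_def monotone_op_def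
  proof (intro conjI allI impI)
    fix x1 x2 u v assume "u \<in> B x1" "v \<in> B x2"
    then obtain u' v' where uv: "u = lam *\<^sub>R u'" "v = lam *\<^sub>R v'" "u' \<in> A (x1 + x)" "v' \<in> A (x2 + x)"
      by (auto simp: B_def)
    have "inner (u' - v') ((x1 + x) - (x2 + x)) \<ge> 0" using mon uv(3,4) by blast
    then have "lam * inner (u' - v') (x1 - x2) \<ge> 0" using lp by simp
    then show "inner (u - v) (x1 - x2) \<ge> 0"
      unfolding uv by (simp add: scaleR_diff_right[symmetric] del: scaleR_diff_right)
  next
    fix z u assume H: "\<forall>y v. v \<in> B y \<longrightarrow> inner (u - v) (z - y) \<ge> 0"
    have "(1/lam) *\<^sub>R u \<in> A (z + x)"
    proof (rule mx)
      fix y' v' assume v': "v' \<in> A y'"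
      then have "lam *\<^sub>R v' \<in> B (y' - x)" by (auto simp: B_def)
      then have h: "inner (u - lam *\<^sub>R v') (z - (y' - x)) \<ge> 0" using H by blast
      have "inner ((1/lam) *\<^sub>R u - v') (z + x - y') = (1/lam) * inner (u - lam *\<^sub>R v') (z - (y' - x))"
        using lp by (simp add: inner_diff_left inner_diff_right algebra_simps)
      then show "inner ((1/lam) *\<^sub>R u - v') (z + x - y') \<ge> 0" using h lp by simp
    qed
    then show "u \<in> B z" unfolding B_def using lp by (intro image_eqI[of _ _ "(1/lam) *\<^sub>R u"]) auto
  qed
  from minty0[OF this] obtain y where "- y \<in> B y" by blast
  then obtain v where v: "v \<in> A (y + x)" "- y = lam *\<^sub>R v" by (auto simp: B_def)
  have ex: "\<exists>u \<in> A (y + x). x = (y + x) + lam *\<^sub>R u" using v by (intro bexI[of _ v]) (auto simp: v(2)[symmetric])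
  have uniq: "w = y + x" if exw: "\<exists>u \<in> A w. x = w + lam *\<^sub>R u" for w
  proof -
    obtain u where u: "u \<in> A w" "x = w + lam *\<^sub>R u" using exw by blast
    have "inner (u - v) (w - (y + x)) \<ge> 0" using mon u(1) v(1) by blast
    moreover have "w - (y + x) = - lam *\<^sub>R (u - v)"
      using u(2) v(2) by (simp add: algebra_simps)
    ultimately have "- lam * inner (u - v) (u - v) \<ge> 0" by simp
    then have "inner (u - v) (u - v) \<le> 0" using lp by (simp add: mult_le_0_iff)
    then have "inner (u - v) (u - v) = 0" by (meson inner_ge_zero order_antisym)
    then have "u = v" by simp
    have "w = x - lam *\<^sub>R u" using u(2) by simp
    also have "\<dots> = x + y" using v(2) \<open>u = v\<close> by (metis diff_minus_eq_add)
    finally show ?thesis by (simp add: add.commute)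
  qed
  have "resolvent A lam x = y + x"
    unfolding resolvent_def by (rule the_equality) (use ex uniq in auto)
  then show ?thesis using ex by simp
qed




lemma deriv_norm_sq:
  fixes x :: "real \<Rightarrow> 'a::real_inner"
  assumes "(x has_vector_derivative v) (at t within S)"
  shows "((\<lambda>s. norm (x s - z)^2) has_real_derivative 2 * inner v (x t - z)) (at t within S)"
proof -
  have d: "((\<lambda>s. x s - z) has_derivative (\<lambda>h. h *\<^sub>R v)) (at t within S)"
    using assms unfolding has_vector_derivative_def by (auto intro!: derivative_eq_intros)
  have "((\<lambda>s. inner (x s - z) (x s - z)) has_derivative
      (\<lambda>h. inner (x t - z) (h *\<^sub>R v) + inner (h *\<^sub>R v) (x t - z))) (at t within S)"
    by (rule has_derivative_inner[OF d d])
  then have "((\<lambda>s. inner (x s - z) (x s - z)) has_derivative (*) (2 * inner v (x t - z))) (at t within S)"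
    by (rule has_derivative_eq_rhs) (auto simp: inner_commute algebra_simps)
  then show ?thesis unfolding has_field_derivative_def power2_norm_eq_inner by simp
qed

lemma deriv_inner_const:
  fixes x :: "real \<Rightarrow> 'a::real_inner"
  assumes "(x has_vector_derivative v) (at t within S)"
  shows "((\<lambda>s. inner (x s) e) has_real_derivative inner v e) (at t within S)"
proof -
  have d: "(x has_derivative (\<lambda>h. h *\<^sub>R v)) (at t within S)"
    using assms unfolding has_vector_derivative_def by auto
  have "((\<lambda>s. inner (x s) e) has_derivative (\<lambda>h. inner (h *\<^sub>R v) e)) (at t within S)"
    by (rule has_derivative_inner_left[OF d])
  then show ?thesis unfolding has_field_derivative_def
    by (rule has_derivative_eq_rhs) (auto simp: algebra_simps)
qed

lemma subgrad:
  fixes \<Phi> :: "'a::real_inner \<Rightarrow> ereal"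
  assumes ninf: "\<forall>y. \<Phi> y \<noteq> -\<infinity>" and cv: "econvex \<Phi>" and g: "g \<in> egradient_op \<Phi> y"
    and z: "\<Phi> z < \<infinity>"
  shows "real_of_ereal (\<Phi> z) \<ge> real_of_ereal (\<Phi> y) + inner g (z - y)"
proof -
  define f where "f = (\<lambda>w. real_of_ereal (\<Phi> w))"
  have y: "\<Phi> y < \<infinity>" and fd: "(f has_derivative (\<lambda>h. inner g h)) (at y)"
    using g by (auto simp: egradient_op_def edom_def f_def)
  have fy: "\<Phi> y = ereal (f y)" using y ninf[rule_format, of y] by (cases "\<Phi> y") (auto simp: f_def)
  have fz: "\<Phi> z = ereal (f z)" using z ninf[rule_format, of z] by (cases "\<Phi> z") (auto simp: f_def)
  define h where "h t = f (y + t *\<^sub>R (z - y))" for t :: real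
  have hd: "(h has_real_derivative inner g (z - y)) (at 0)"
  proof -
    have l: "((\<lambda>t::real. y + t *\<^sub>R (z - y)) has_derivative (\<lambda>t. t *\<^sub>R (z - y))) (at 0)"
      by (auto intro!: derivative_eq_intros)
    have "(h has_derivative (\<lambda>t. inner g (t *\<^sub>R (z - y)))) (at 0)"
      unfolding h_def using has_derivative_compose[OF l, of f "\<lambda>h. inner g h"] fd by simp
    then show ?thesis unfolding has_field_derivative_def
      by (rule has_derivative_eq_rhs) (auto simp: algebra_simps)
  qed
  have hle: "h t \<le> f y + t * (f z - f y)" if t: "0 < t" "t \<le> 1" for t
  proof -
    have "\<Phi> ((1 - t) *\<^sub>R y + t *\<^sub>R z) \<le> ereal (1 - t) * \<Phi> y + ereal t * \<Phi> z"
      using cv t unfolding econvex_def by auto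
    also have "\<dots> = ereal ((1-t) * f y + t * f z)" by (simp add: fy fz)
    finally have le: "\<Phi> ((1 - t) *\<^sub>R y + t *\<^sub>R z) \<le> ereal ((1-t) * f y + t * f z)" .
    have eq: "(1 - t) *\<^sub>R y + t *\<^sub>R z = y + t *\<^sub>R (z - y)" by (simp add: algebra_simps)
    have "f (y + t *\<^sub>R (z - y)) \<le> (1-t) * f y + t * f z"
      using le ninf[rule_format, of "y + t *\<^sub>R (z - y)"] unfolding eq f_def
      by (cases "\<Phi> (y + t *\<^sub>R (z - y))") auto
    then show ?thesis by (simp add: h_def algebra_simps)
  qed
  have h0: "h 0 = f y" by (simp add: h_def)
  have "((\<lambda>t. (h t - h 0) / (t - 0)) \<longlongrightarrow> inner g (z - y)) (at_right 0)"
    using hd unfolding has_field_derivative_iff by (rule filterlim_mono) (auto simp: at_le)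
  moreover have "eventually (\<lambda>t. (h t - h 0) / (t - 0) \<le> f z - f y) (at_right (0::real))"
  proof -
    have "eventually (\<lambda>t. 0 < t \<and> t < 1) (at_right (0::real))"
      using eventually_at_right[of 0 "1::real"] by (auto intro: exI[of _ 1])
    then show ?thesis
    proof (rule eventually_mono)
      fix t :: real assume "0 < t \<and> t < 1"
      then show "(h t - h 0) / (t - 0) \<le> f z - f y"
      proof -
        have "h t - h 0 \<le> t * (f z - f y)" using hle[of t] h0 \<open>0 < t \<and> t < 1\<close> by (simp add: algebra_simps)
        then show ?thesis using \<open>0 < t \<and> t < 1\<close> by (simp add: divide_le_eq mult.commute)
      qed
    qed
  qed
  ultimately have "inner g (z - y) \<le> f z - f y"
    by (rule tendsto_upperbound) simp
  then show ?thesis unfolding f_def by simp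
qed


lemma antimono_deriv:
  fixes f f' :: "real \<Rightarrow> real"
  assumes d: "\<And>t. t \<ge> a \<Longrightarrow> (f has_real_derivative f' t) (at t within {a..})"
    and n: "\<And>t. t \<ge> a \<Longrightarrow> f' t \<le> 0" and "a \<le> s" "s \<le> t"
  shows "f t \<le> f s"
proof (rule DERIV_nonpos_imp_decreasing_open[OF \<open>s \<le> t\<close>])
  fix y assume "s < y" "y < t"
  then have "y \<in> interior {a..}" using \<open>a \<le> s\<close> by auto
  then have "at y within {a..} = at y" by (rule at_within_interior)
  then show "\<exists>z. (f has_real_derivative z) (at y) \<and> z \<le> 0"
    using d[of y] n[of y] \<open>s < y\<close> \<open>a \<le> s\<close> by auto
next
  have "continuous_on {a..} f"
    unfolding continuous_on_eq_continuous_within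
    using d by (auto intro: DERIV_continuous)
  then show "continuous_on {s..t} f"
    by (rule continuous_on_subset) (use \<open>a \<le> s\<close> in auto)
qed

theorem theorem3p2:
  fixes A :: "'a::{real_inner, complete_space} \<Rightarrow> 'a set"
    and \<theta> :: real and p :: nat
    and x :: "real \<Rightarrow> 'a" and lam :: "real \<Rightarrow> real"
  assumes maxmon: "maximal_monotone A"
    and zeros_ne: "zeros_op A \<noteq> {}"
    and theta_pos: "\<theta> > 0"
    and p_ge: "p \<ge> 1"
    and lam_pos: "\<forall>t\<ge>0. lam t > 0"
    and ode: "\<forall>t\<ge>0. (x has_vector_derivative
                 (resolvent A (lam t) (x t) - x t)) (at t within {0..})"
    and alg: "\<forall>t\<ge>0. lam t * norm (resolvent A (lam t) (x t) - x t) ^ (p - 1) = \<theta>"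
    and init: "0 \<notin> A (x 0)"
    and cases: "(\<exists>\<Phi> :: 'a \<Rightarrow> ereal. (\<forall>y. \<Phi> y \<noteq> -\<infinity>) \<and> econvex \<Phi> \<and>
                   edifferentiable \<Phi> \<and> inf_compact \<Phi> \<and> A = egradient_op \<Phi>)
               \<or> interior (zeros_op A) \<noteq> {}"
  shows "\<exists>xb \<in> zeros_op A. (x \<longlongrightarrow> xb) at_top"
proof -
  have mon: "\<And>x y u v. u \<in> A x \<Longrightarrow> v \<in> A y \<Longrightarrow> inner (u - v) (x - y) \<ge> 0"
    using maxmon unfolding maximal_monotone_def monotone_op_def by blast
  have mx: "\<And>x u. (\<And>y v. v \<in> A y \<Longrightarrow> inner (u - v) (x - y) \<ge> 0) \<Longrightarrow> u \<in> A x"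
    using maxmon unfolding maximal_monotone_def by blast
  define J where "J t = resolvent A (lam t) (x t)" for t
  define U where "U t = (1 / lam t) *\<^sub>R (x t - J t)" for t
  have UA: "U t \<in> A (J t)" if t: "t \<ge> 0" for t
  proof -
    have lp: "lam t > 0" using lam_pos t by auto
    obtain u where u: "u \<in> A (J t)" "x t = J t + lam t *\<^sub>R u"
      using resolvent_prop[OF maxmon lp, of "x t"] unfolding J_def by blast
    have "U t = u" unfolding U_def using u(2) lp by simp
    then show ?thesis using u(1) by simp
  qed
  have normU: "norm (U t) = norm (x t - J t) ^ p / \<theta>" if t: "t \<ge> 0" for t
  proof -
    have lp: "lam t > 0" using lam_pos t by auto
    have a: "lam t * norm (x t - J t) ^ (p - 1) = \<theta>"
      using alg t unfolding J_def by (simp add: norm_minus_commute)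
    have pp: "norm (x t - J t) ^ p = norm (x t - J t) * norm (x t - J t) ^ (p - 1)"
      using p_ge by (metis Suc_diff_1 less_le_trans power_Suc zero_less_one)
    have "norm (U t) = norm (x t - J t) / lam t" unfolding U_def using lp by simp
    also have "\<dots> = norm (x t - J t) ^ p / \<theta>"
      unfolding pp a[symmetric] using lp theta_pos a by (auto simp: field_simps)
    finally show ?thesis .
  qed
  have mono_ineq: "inner (x t - J t) (J t - z) \<ge> 0" if z: "z \<in> zeros_op A" and t: "t \<ge> 0" for z t
  proof -
    have lp: "lam t > 0" using lam_pos t by auto
    have "inner (U t - 0) (J t - z) \<ge> 0" using mon[OF UA[OF t], of 0 z] z by (simp add: zeros_op_def)
    then have "(1 / lam t) * inner (x t - J t) (J t - z) \<ge> 0" by (simp add: U_def)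
    then show ?thesis using lp by (simp add: zero_le_divide_iff)
  qed
  have ineq: "inner (J t - x t) (x t - z) \<le> - (norm (x t - J t)^2)" if z: "z \<in> zeros_op A" and t: "t \<ge> 0" for z t
  proof -
    have "inner (J t - x t) (x t - z) = - (norm (x t - J t)^2) - inner (x t - J t) (J t - z)"
      by (simp add: power2_norm_eq_inner inner_diff_left inner_diff_right inner_commute algebra_simps)
    then show ?thesis using mono_ineq[OF z t] by simp
  qed
  have Jz: "norm (J t - z) \<le> norm (x t - z)" if z: "z \<in> zeros_op A" and t: "t \<ge> 0" for z t
  proof -
    have "norm (x t - z)^2 = norm (x t - J t)^2 + 2 * inner (x t - J t) (J t - z) + norm (J t - z)^2"
      by (simp add: power2_norm_eq_inner inner_diff_left inner_diff_right inner_commute algebra_simps)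
    then have "norm (J t - z)^2 \<le> norm (x t - z)^2" using mono_ineq[OF z t] by (simp add: add_nonneg_nonneg)
    then show ?thesis by (rule power2_le_imp_le) simp
  qed
  have dx: "(x has_vector_derivative (J t - x t)) (at t within {0..})" if "t \<ge> 0" for t
    using ode that unfolding J_def by blast
  have dec: "norm (x t - z) \<le> norm (x s - z)" if z: "z \<in> zeros_op A" and st: "0 \<le> s" "s \<le> t" for z s t
  proof -
    have "norm (x t - z)^2 \<le> norm (x s - z)^2"
    proof (rule antimono_deriv[of 0 _ "\<lambda>t. 2 * inner (J t - x t) (x t - z)", OF _ _ st])
      show "((\<lambda>s. norm (x s - z)^2) has_real_derivative 2 * inner (J t - x t) (x t - z)) (at t within {0..})"
        if "t \<ge> 0" for t using deriv_norm_sq[OF dx[OF that]] .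
      show "2 * inner (J t - x t) (x t - z) \<le> 0" if "t \<ge> 0" for t
        using ineq[OF z that] by (smt (verit) zero_le_power2)
    qed
    then show ?thesis by (rule power2_le_imp_le) simp
  qed
  obtain z0 where z0: "z0 \<in> zeros_op A" using zeros_ne by blast
  have small: "\<exists>t\<ge>T. norm (x t - J t) < \<epsilon>" if e: "\<epsilon> > 0" and T: "T \<ge> 0" for \<epsilon> T
  proof (rule ccontr)
    assume "\<not> ?thesis"
    then have big: "\<And>t. t \<ge> T \<Longrightarrow> norm (x t - J t) \<ge> \<epsilon>" by (meson not_le)
    define g where "g s = norm (x s - z0)^2 + 2 * \<epsilon>^2 * s" for s
    have gle: "g t \<le> g T" if "t \<ge> T" for t
    proof (rule antimono_deriv[of T _ "\<lambda>t. 2 * inner (J t - x t) (x t - z0) + 2 * \<epsilon>^2", OF _ _ order_refl that])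
      fix t assume tT: "t \<ge> T"
      then have t0: "t \<ge> 0" using T by simp
      have "((\<lambda>s. norm (x s - z0)^2) has_real_derivative 2 * inner (J t - x t) (x t - z0)) (at t within {T..})"
        using deriv_norm_sq[OF dx[OF t0]] by (rule DERIV_subset) (use T in auto)
      moreover have "((\<lambda>s. 2 * \<epsilon>^2 * s) has_real_derivative 2 * \<epsilon>^2) (at t within {T..})"
        by (auto intro!: derivative_eq_intros)
      ultimately show "(g has_real_derivative 2 * inner (J t - x t) (x t - z0) + 2 * \<epsilon>^2) (at t within {T..})"
        unfolding g_def by (rule DERIV_add)
      have "\<epsilon>^2 \<le> norm (x t - J t)^2" using big[OF tT] e by (simp add: power_mono)
      then show "2 * inner (J t - x t) (x t - z0) + 2 * \<epsilon>^2 \<le> 0"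
        using ineq[OF z0 t0] by simp
    qed
    define t where "t = T + (norm (x T - z0)^2 + 1) / (2 * \<epsilon>^2)"
    have tT: "t \<ge> T" using e by (simp add: t_def)
    have "g t \<ge> 2 * \<epsilon>^2 * t" by (simp add: g_def)
    also have "2 * \<epsilon>^2 * t = 2 * \<epsilon>^2 * T + norm (x T - z0)^2 + 1"
      using e by (simp add: t_def field_simps)
    finally have "g t > g T" by (simp add: g_def)
    then show False using gle[OF tT] by simp
  qed
  have "\<forall>n. \<exists>t\<ge>real n. norm (x t - J t) < 1 / real (Suc n)"
    using small by simp
  then obtain ts where ts: "\<And>n. ts n \<ge> real n" "\<And>n. norm (x (ts n) - J (ts n)) < 1 / real (Suc n)"
    by metis
  have ts0: "ts n \<ge> 0" for n using ts(1)[of n] by simp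
  have ts_top: "filterlim ts at_top sequentially"
    by (rule filterlim_at_top_mono[OF filterlim_real_sequentially]) (use ts(1) in auto)
  have d0: "(\<lambda>n. x (ts n) - J (ts n)) \<longlonglongrightarrow> 0"
    by (rule LIMSEQ_norm_0) (use ts(2) in auto)
  have U0: "(\<lambda>n. U (ts n)) \<longlonglongrightarrow> 0"
  proof -
    have "(\<lambda>n. norm (x (ts n) - J (ts n)) ^ p / \<theta>) \<longlonglongrightarrow> 0 ^ p / \<theta>"
      using theta_pos by (auto intro!: tendsto_intros tendsto_norm_zero d0)
    moreover have "(0::real) ^ p = 0" using p_ge by (simp add: zero_power)
    ultimately have "(\<lambda>n. norm (U (ts n))) \<longlonglongrightarrow> 0" by (simp add: normU[OF ts0])
    then show ?thesis by (rule tendsto_norm_zero_cancel)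
  qed
  have closed: "0 \<in> A w" if y: "y \<longlonglongrightarrow> w" and v: "v \<longlonglongrightarrow> 0" and vy: "\<And>n. v n \<in> A (y n)" for y v w
  proof (rule mx)
    fix a b assume b: "b \<in> A a"
    have "(\<lambda>n. inner (v n - b) (y n - a)) \<longlonglongrightarrow> inner (0 - b) (w - a)"
      by (intro tendsto_intros y v)
    moreover have "\<forall>n. 0 \<le> inner (v n - b) (y n - a)" using mon[OF vy b] by blast
    ultimately show "0 \<le> inner (0 - b) (w - a)" by (intro LIMSEQ_le_const) auto
  qed
  have fejer: "(x \<longlongrightarrow> z) at_top"
    if z: "z \<in> zeros_op A" and s: "filterlim s at_top sequentially" and xs: "(\<lambda>n. x (s n)) \<longlonglongrightarrow> z" for z s
  proof (rule tendstoI)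
    fix e :: real assume e: "e > 0"
    have "eventually (\<lambda>n. dist (x (s n)) z < e) sequentially" using xs e by (rule tendstoD)
    moreover have "eventually (\<lambda>n. s n \<ge> 0) sequentially" using s by (simp add: filterlim_at_top)
    ultimately have "eventually (\<lambda>n. dist (x (s n)) z < e \<and> s n \<ge> 0) sequentially"
      by eventually_elim auto
    then obtain n where n: "dist (x (s n)) z < e" "s n \<ge> 0" using eventually_sequentially by auto
    show "eventually (\<lambda>t. dist (x t) z < e) at_top"
      unfolding eventually_at_top_linorder
    proof (intro exI[of _ "s n"] allI impI)
      fix t assume "t \<ge> s n"
      then have "norm (x t - z) \<le> norm (x (s n) - z)" using dec[OF z n(2)] by blast
      then show "dist (x t) z < e" using n(1) by (simp add: dist_norm)
    qed
  qed
  from cases show ?thesis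
  proof
    assume "\<exists>\<Phi> :: 'a \<Rightarrow> ereal. (\<forall>y. \<Phi> y \<noteq> -\<infinity>) \<and> econvex \<Phi> \<and>
                   edifferentiable \<Phi> \<and> inf_compact \<Phi> \<and> A = egradient_op \<Phi>"
    then obtain \<Phi> :: "'a \<Rightarrow> ereal" where ninf: "\<forall>y. \<Phi> y \<noteq> -\<infinity>" and cvx: "econvex \<Phi>"
      and ic: "inf_compact \<Phi>" and AP: "A = egradient_op \<Phi>" by blast
    have z0fin: "\<Phi> z0 < \<infinity>" using z0 unfolding AP zeros_op_def egradient_op_def edom_def by auto
    define R0 where "R0 = norm (x 0 - z0)"
    define r where "r = norm z0 + R0 + 1"
    define \<kappa> where "\<kappa> = real_of_ereal (\<Phi> z0) + R0 / \<theta>"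
    have inK: "J (ts n) \<in> closure {y. norm y \<le> r \<and> \<Phi> y \<le> ereal \<kappa>}" for n
    proof (rule closure_subset[THEN subsetD], safe)
      have t0: "ts n \<ge> 0" by (rule ts0)
      have JR: "norm (J (ts n) - z0) \<le> R0"
        unfolding R0_def using Jz[OF z0 t0] dec[OF z0 order_refl t0] by linarith
      then show "norm (J (ts n)) \<le> r" unfolding r_def using norm_triangle_sub[of "J (ts n)" z0]
        by (smt (verit) norm_minus_commute norm_triangle_ineq4)
      have gr: "U (ts n) \<in> egradient_op \<Phi> (J (ts n))" using UA[OF t0] AP by simp
      then have Jfin: "\<Phi> (J (ts n)) < \<infinity>" by (simp add: egradient_op_def edom_def)
      have sg: "real_of_ereal (\<Phi> z0) \<ge> real_of_ereal (\<Phi> (J (ts n))) + inner (U (ts n)) (z0 - J (ts n))"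
        by (rule subgrad[OF ninf cvx gr z0fin])
      have nd: "norm (x (ts n) - J (ts n)) \<le> 1"
      proof -
        have "1 / real (Suc n) \<le> 1" by simp
        then show ?thesis using ts(2)[of n] by argo
      qed
      have "norm (U (ts n)) \<le> 1 / \<theta>"
        unfolding normU[OF t0] using theta_pos nd by (simp add: divide_right_mono power_le_one)
      then have "norm (U (ts n)) * norm (z0 - J (ts n)) \<le> (1/\<theta>) * R0"
        using JR theta_pos by (intro mult_mono) (auto simp: norm_minus_commute)
      moreover have "- inner (U (ts n)) (z0 - J (ts n)) \<le> norm (U (ts n)) * norm (z0 - J (ts n))"
        using Cauchy_Schwarz_ineq2[of "U (ts n)" "z0 - J (ts n)"] by simp
      ultimately have "real_of_ereal (\<Phi> (J (ts n))) \<le> \<kappa>" using sg unfolding \<kappa>_def by simp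
      then show "\<Phi> (J (ts n)) \<le> ereal \<kappa>"
        using Jfin ninf[rule_format, of "J (ts n)"] by (cases "\<Phi> (J (ts n))") auto
    qed
    have rpos: "r > 0" unfolding r_def R0_def by (smt (verit) norm_ge_zero)
    have "compact (closure {y. norm y \<le> r \<and> \<Phi> y \<le> ereal \<kappa>})"
      using ic rpos unfolding inf_compact_def by blast
    then obtain w \<sigma> where w: "strict_mono \<sigma>" "((\<lambda>n. J (ts n)) \<circ> \<sigma>) \<longlonglongrightarrow> w"
      using compact_imp_seq_compact inK by (metis seq_compactE)
    have d0s: "((\<lambda>n. x (ts n) - J (ts n)) \<circ> \<sigma>) \<longlonglongrightarrow> 0" by (rule LIMSEQ_subseq_LIMSEQ[OF d0 w(1)])
    have U0s: "((\<lambda>n. U (ts n)) \<circ> \<sigma>) \<longlonglongrightarrow> 0" by (rule LIMSEQ_subseq_LIMSEQ[OF U0 w(1)])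
    have xs: "(\<lambda>n. x (ts (\<sigma> n))) \<longlonglongrightarrow> w"
    proof -
      have "(\<lambda>n. (x (ts (\<sigma> n)) - J (ts (\<sigma> n))) + J (ts (\<sigma> n))) \<longlonglongrightarrow> 0 + w"
        using tendsto_add[OF d0s w(2)] by (simp add: o_def)
      then show ?thesis by simp
    qed
    have wz: "w \<in> zeros_op A"
      unfolding zeros_op_def using closed[of "\<lambda>n. J (ts (\<sigma> n))" w "\<lambda>n. U (ts (\<sigma> n))"] w(2) U0s UA[OF ts0]
      by (simp add: o_def)
    have "filterlim (\<lambda>n. ts (\<sigma> n)) at_top sequentially"
      using filterlim_compose[OF ts_top filterlim_subseq[OF w(1)]] by (simp add: o_def)
    from fejer[OF wz this xs] wz show ?thesis by blast
  next
    assume "interior (zeros_op A) \<noteq> {}"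
    then obtain c where "c \<in> interior (zeros_op A)" by blast
    then obtain r where r: "r > 0" "ball c r \<subseteq> zeros_op A" by (meson mem_interior)
    define \<rho> where "\<rho> = r / 2"
    have rho: "\<rho> > 0" "\<rho> < r" using r by (auto simp: \<rho>_def)
    have pw: "inner (J t - x t) (x t - c) + \<rho> * norm (J t - x t) \<le> 0" if t: "t \<ge> 0" for t
    proof (cases "J t = x t")
      case True then show ?thesis by simp
    next
      case False
      define d where "d = J t - x t"
      have dn: "norm d > 0" using False by (simp add: d_def)
      define z where "z = c - (\<rho> / norm d) *\<^sub>R d"
      have "dist c z = \<rho>" using dn rho by (simp add: z_def dist_norm)
      then have "z \<in> zeros_op A" using r rho by auto
      from ineq[OF this t] have "inner d (x t - z) \<le> 0" unfolding d_def by (smt (verit) zero_le_power2)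
      moreover have "inner d (x t - z) = inner d (x t - c) + \<rho> * norm d"
        using dn by (simp add: z_def inner_diff_right inner_add_right power2_norm_eq_inner[symmetric] power2_eq_square)
      ultimately show ?thesis unfolding d_def by simp
    qed
    define \<phi> where "\<phi> t = norm (x t - c)^2" for t
    have len: "2 * \<rho> * norm (x t - x s) \<le> \<phi> s - \<phi> t" if st: "0 \<le> s" "s \<le> t" for s t
    proof (cases "x t = x s")
      case True
      have "\<phi> t \<le> \<phi> s" using dec[of c s t] st r rho unfolding \<phi>_def
        by (smt (verit) centre_in_ball norm_ge_zero power_mono subsetD)
      then show ?thesis using True by simp
    next
      case False
      define e where "e = (1 / norm (x t - x s)) *\<^sub>R (x t - x s)"
      have ne: "norm e = 1" using False by (simp add: e_def)
      define \<psi> where "\<psi> t = 2 * \<rho> * inner (x t) e + \<phi> t" for t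
      have "\<psi> t \<le> \<psi> s"
      proof (rule antimono_deriv[of 0 _ "\<lambda>t. 2 * \<rho> * inner (J t - x t) e + 2 * inner (J t - x t) (x t - c)", OF _ _ st])
        fix t :: real assume t0: "t \<ge> 0"
        show "(\<psi> has_real_derivative 2 * \<rho> * inner (J t - x t) e + 2 * inner (J t - x t) (x t - c)) (at t within {0..})"
          unfolding \<psi>_def \<phi>_def
          by (rule DERIV_add[OF DERIV_cmult[OF deriv_inner_const[OF dx[OF t0]]] deriv_norm_sq[OF dx[OF t0]]])
        have "inner (J t - x t) e \<le> norm (J t - x t)"
          using Cauchy_Schwarz_ineq2[of "J t - x t" e] ne by simp
        then have "\<rho> * inner (J t - x t) e \<le> \<rho> * norm (J t - x t)" using rho by (simp add: mult_left_mono)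
        then show "2 * \<rho> * inner (J t - x t) e + 2 * inner (J t - x t) (x t - c) \<le> 0"
          using pw[OF t0] by simp
      qed
      moreover have "inner (x t) e - inner (x s) e = norm (x t - x s)"
      proof -
        have "inner (x t) e - inner (x s) e = inner (x t - x s) e" by (simp add: inner_diff_left)
        also have "\<dots> = inner (x t - x s) (x t - x s) / norm (x t - x s)" by (simp add: e_def)
        also have "\<dots> = norm (x t - x s)" using False by (simp add: dot_square_norm power2_eq_square)
        finally show ?thesis .
      qed
      ultimately show ?thesis unfolding \<psi>_def by (simp add: algebra_simps)
    qed
    have phi0: "\<phi> t \<ge> 0" for t by (simp add: \<phi>_def)
    have cau: "\<exists>S\<ge>0. \<forall>s t. S \<le> s \<longrightarrow> S \<le> t \<longrightarrow> norm (x t - x s) < \<epsilon>" if e: "\<epsilon> > 0" for \<epsilon>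
    proof -
      define L where "L = Inf (\<phi> ` {0..})"
      have bb: "bdd_below (\<phi> ` {0..})" using phi0 by (intro bdd_belowI[of _ 0]) auto
      have "Inf (\<phi> ` {0..}) < L + 2 * \<rho> * \<epsilon>" using rho e by (simp add: L_def)
      then obtain S where S: "S \<ge> 0" "\<phi> S < L + 2 * \<rho> * \<epsilon>"
        using cInf_less_iff[OF _ bb] by auto
      have Lle: "L \<le> \<phi> t" if "t \<ge> 0" for t unfolding L_def using bb that by (auto intro: cInf_lower)
      have main: "norm (x t - x s) < \<epsilon>" if "S \<le> s" "s \<le> t" for s t
      proof -
        have "2 * \<rho> * norm (x t - x s) \<le> \<phi> s - \<phi> t" using len[of s t] that S by simp
        also have "\<phi> s \<le> \<phi> S" using len[of S s] that S by (smt (verit) mult_nonneg_nonneg norm_ge_zero rho(1))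
        then have "\<phi> s - \<phi> t < 2 * \<rho> * \<epsilon>" using Lle[of t] S that by simp
        finally show ?thesis using rho by simp
      qed
      have "\<forall>s t. S \<le> s \<longrightarrow> S \<le> t \<longrightarrow> norm (x t - x s) < \<epsilon>"
      proof (intro allI impI)
        fix s t assume "S \<le> s" "S \<le> t"
        then show "norm (x t - x s) < \<epsilon>"
          using main[of s t] main[of t s] by (cases "s \<le> t") (auto simp: norm_minus_commute)
      qed
      then show ?thesis using S by blast
    qed
    have "Cauchy (\<lambda>n. x (real n))"
    proof (rule CauchyI)
      fix e :: real assume "e > 0"
      then obtain S where S: "S \<ge> 0" "\<forall>s t. S \<le> s \<longrightarrow> S \<le> t \<longrightarrow> norm (x t - x s) < e" using cau by blast
      obtain M :: nat where "S \<le> real M" using real_arch_simple by blast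
      then show "\<exists>M. \<forall>m\<ge>M. \<forall>n\<ge>M. norm (x (real m) - x (real n)) < e"
        using S by (intro exI[of _ M]) force
    qed
    then obtain L where xl: "(\<lambda>n. x (real n)) \<longlonglongrightarrow> L" by (meson Cauchy_convergent_iff convergent_def)
    have diff: "(\<lambda>n. x (ts n) - x (real n)) \<longlonglongrightarrow> 0"
    proof (rule LIMSEQ_I)
      fix e :: real assume "e > 0"
      then obtain S where S: "S \<ge> 0" "\<forall>s t. S \<le> s \<longrightarrow> S \<le> t \<longrightarrow> norm (x t - x s) < e" using cau by blast
      obtain M :: nat where "S \<le> real M" using real_arch_simple by blast
      then show "\<exists>M. \<forall>n\<ge>M. norm (x (ts n) - x (real n) - 0) < e"
        using S ts(1) by (intro exI[of _ M]) (smt (verit) diff_zero of_nat_le_iff)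
    qed
    have xts: "(\<lambda>n. x (ts n)) \<longlonglongrightarrow> L"
      using tendsto_add[OF diff xl] by simp
    have Jts: "(\<lambda>n. J (ts n)) \<longlonglongrightarrow> L"
      using tendsto_diff[OF xts d0] by simp
    have Lz: "L \<in> zeros_op A"
      unfolding zeros_op_def using closed[OF Jts U0] UA[OF ts0] by blast
    from fejer[OF Lz filterlim_real_sequentially xl] Lz show ?thesis by blast
  qed
qed


end
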